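(* Let $X$ be a countably cellular Tychonoff space and $\mathcal M$ the $\sigma$-ideal of meager subsets of $X$. Then (1) every meager subset of $X$ is contained in a meager functionally Borel subset of $X$; (2) every family of pairwise disjoint nonmeager Borel subsets of $X$ is countable; (3) $\mathcal{B}o^\pm\mathcal M=\mathcal{B}a^\pm\mathcal M$, and this $\sigma$-algebra equals the $\sigma$-algebra of subsets of $X$ having the Baire Property.
   Context: A space is countably cellular if every family of pairwise disjoint open sets is countable. A subset $A\subseteq X$ is functionally Borel if $A=f^{-1}[B]$ for a continuous $f:X\to\mathbb R^\omega$ and Borel $B\subseteq\mathbb R^\omega$. $\mathcal{B}o$ and $\mathcal{B}a$ denote the $\sigma$-algebras of Borel and functionally Borel subsets of $X$, and $\mathcal A^\pm\mathcal M$ is the smallest $\sigma$-algebra containing $\mathcal A\cup\mathcal M$. A set has the Baire Property if it belongs to the smallest $\sigma$-algebra containing all open and all meager sets. *)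

theory Defs
  imports "HOL-Analysis.Analysis"
begin

definition tychonoff_space :: "'a topology \<Rightarrow> bool" where
  "tychonoff_space X \<longleftrightarrow> completely_regular_space X \<and> t1_space X"

definition countably_cellular :: "'a topology \<Rightarrow> bool" where
  "countably_cellular X \<longleftrightarrow>
     (\<forall>\<U>. (\<forall>U\<in>\<U>. openin X U) \<and> pairwise disjnt \<U> \<longrightarrow> countable \<U>)"

definition nowhere_dense_in :: "'a topology \<Rightarrow> 'a set \<Rightarrow> bool" where
  "nowhere_dense_in X S \<longleftrightarrow> S \<subseteq> topspace X \<and> X interior_of (X closure_of S) = {}"

definition meager_in :: "'a topology \<Rightarrow> 'a set \<Rightarrow> bool" where
  "meager_in X S \<longleftrightarrow> S \<subseteq> topspace X \<and>
     (\<exists>\<N>. countable \<N> \<and> (\<forall>N\<in>\<N>. nowhere_dense_in X N) \<and> S \<subseteq> \<Union>\<N>)"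

definition borel_sets_of :: "'a topology \<Rightarrow> 'a set set" where
  "borel_sets_of X = sigma_sets (topspace X) {U. openin X U}"

definition real_omega :: "(nat \<Rightarrow> real) topology" where
  "real_omega = product_topology (\<lambda>n. euclideanreal) UNIV"

definition functionally_borel :: "'a topology \<Rightarrow> 'a set \<Rightarrow> bool" where
  "functionally_borel X A \<longleftrightarrow>
     (\<exists>f B. continuous_map X real_omega f \<and> B \<in> borel_sets_of real_omega \<and>
            A = {x \<in> topspace X. f x \<in> B})"

definition Bo :: "'a topology \<Rightarrow> 'a set set" where
  "Bo X = borel_sets_of X"

definition Ba :: "'a topology \<Rightarrow> 'a set set" where
  "Ba X = {A. functionally_borel X A}"

definition meager_ideal :: "'a topology \<Rightarrow> 'a set set" where
  "meager_ideal X = {M. meager_in X M}"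

text \<open>\<open>\<A>\<^sup>\<plusminus>\<M>\<close>: smallest sigma-algebra (on the topspace) containing \<open>\<A> \<union> \<M>\<close>.\<close>
definition pm_sigma :: "'a topology \<Rightarrow> 'a set set \<Rightarrow> 'a set set \<Rightarrow> 'a set set" where
  "pm_sigma X \<A> \<M> = sigma_sets (topspace X) (\<A> \<union> \<M>)"

definition baire_property_sets :: "'a topology \<Rightarrow> 'a set set" where
  "baire_property_sets X = sigma_sets (topspace X) ({U. openin X U} \<union> meager_ideal X)"

end

theory Submission
  imports Defs
begin


lemma nowhere_dense_closed_minus_interior:
  assumes "closedin X C"
  shows "nowhere_dense_in X (C - X interior_of C)"
proof -
  have sub: "C \<subseteq> topspace X" using assms closedin_subset by blast
  have clo: "closedin X (C - X interior_of C)" by (simp add: assms closedin_diff)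
  hence cl: "X closure_of (C - X interior_of C) = C - X interior_of C" by (simp add: closure_of_closedin)
  have "X interior_of (X closure_of (C - X interior_of C)) = {}"
  proof -
    have a: "X interior_of (C - X interior_of C) \<subseteq> C - X interior_of C" by (rule interior_of_subset)
    have b: "X interior_of (C - X interior_of C) \<subseteq> X interior_of C" by (rule interior_of_mono) blast
    show ?thesis unfolding cl using a b by blast
  qed
  with sub show ?thesis unfolding nowhere_dense_in_def by blast
qed

lemma nowhere_dense_subset:
  assumes "nowhere_dense_in X A" "B \<subseteq> A" shows "nowhere_dense_in X B"
proof -
  have c: "X interior_of (X closure_of B) \<subseteq> X interior_of (X closure_of A)"
    using assms(2) by (intro interior_of_mono closure_of_mono)
  have e: "X interior_of (X closure_of A) = {}" "A \<subseteq> topspace X"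
    using assms(1) unfolding nowhere_dense_in_def by auto
  have b1: "X interior_of (X closure_of B) = {}" using c unfolding e(1) by (rule subset_empty[THEN iffD1])
  have b2: "B \<subseteq> topspace X" using assms(2) \<open>A \<subseteq> topspace X\<close> by (rule order_trans)
  show ?thesis unfolding nowhere_dense_in_def using b2 b1 by (rule conjI)
qed

lemma meager_subset: "meager_in X A \<Longrightarrow> B \<subseteq> A \<Longrightarrow> meager_in X B"
  unfolding meager_in_def by (meson order_trans)

lemma nowhere_dense_meager: "nowhere_dense_in X A \<Longrightarrow> meager_in X A"
  unfolding meager_in_def nowhere_dense_in_def
  by (rule conjI, simp, rule exI[of _ "{A}"], simp add: nowhere_dense_in_def)

lemma meager_Union:
  assumes "countable \<A>" "\<And>A. A \<in> \<A> \<Longrightarrow> meager_in X A"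
  shows "meager_in X (\<Union>\<A>)"
proof -
  have "\<forall>A\<in>\<A>. \<exists>\<N>. countable \<N> \<and> (\<forall>N\<in>\<N>. nowhere_dense_in X N) \<and> A \<subseteq> \<Union>\<N>"
    using assms(2) unfolding meager_in_def by auto
  then obtain F where F: "\<And>A. A\<in>\<A> \<Longrightarrow> countable (F A) \<and> (\<forall>N\<in>F A. nowhere_dense_in X N) \<and> A \<subseteq> \<Union>(F A)"
    by metis
  have c: "countable (\<Union>A\<in>\<A>. F A)"
  proof (rule countable_UN[OF assms(1)])
    fix A assume "A \<in> \<A>" then show "countable (F A)" using F by simp
  qed
  have nd: "\<forall>N\<in>(\<Union>A\<in>\<A>. F A). nowhere_dense_in X N" using F by auto
  have sub: "\<Union>\<A> \<subseteq> \<Union>(\<Union>A\<in>\<A>. F A)"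
  proof
    fix x assume "x \<in> \<Union>\<A>"
    then obtain A where A: "A \<in> \<A>" "x \<in> A" by auto
    have "A \<subseteq> \<Union>(F A)" using F A(1) by simp
    then have "x \<in> \<Union>(F A)" using A(2) by (rule subsetD)
    then obtain N where "N \<in> F A" "x \<in> N" by auto
    then show "x \<in> \<Union>(\<Union>A\<in>\<A>. F A)" using A by auto
  qed
  have top: "\<Union>\<A> \<subseteq> topspace X" using assms(2) unfolding meager_in_def by auto
  show ?thesis unfolding meager_in_def using top c nd sub by auto
qed

lemma meager_Un: "meager_in X A \<Longrightarrow> meager_in X B \<Longrightarrow> meager_in X (A \<union> B)"
  using meager_Union[of "{A,B}" X] by auto

lemma ccc_maximal:
  assumes "countably_cellular X" "\<And>P. P\<in>\<P> \<Longrightarrow> openin X P \<and> P \<noteq> {}"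
  obtains \<C> where "\<C> \<subseteq> \<P>" "countable \<C>" "pairwise disjnt \<C>" "\<forall>P\<in>\<P>. \<exists>C\<in>\<C>. P \<inter> C \<noteq> {}"
proof -
  let ?S = "{\<C>. \<C> \<subseteq> \<P> \<and> pairwise disjnt \<C>}"
  have "\<forall>C\<in>chains ?S. \<Union>C \<in> ?S"
  proof
    fix C assume C: "C \<in> chains ?S"
    hence sub: "C \<subseteq> ?S" and ch: "chain\<^sub>\<subseteq> C" unfolding chains_def by auto
    have "pairwise disjnt (\<Union>C)"
    proof (rule pairwise_chain_Union[OF _ ch])
      fix S assume "S \<in> C" then show "pairwise disjnt S" using sub by auto
    qed
    moreover have "\<Union>C \<subseteq> \<P>" using sub by auto
    ultimately show "\<Union>C \<in> ?S" by simp
  qed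
  from Zorn_Lemma[OF this] obtain M where M: "M \<in> ?S" and max: "\<And>Y. Y \<in> ?S \<Longrightarrow> M \<subseteq> Y \<Longrightarrow> Y = M"
    by auto
  have MP: "M \<subseteq> \<P>" and Md: "pairwise disjnt M" using M by auto
  have "\<forall>U\<in>M. openin X U" using MP assms(2) by auto
  hence cM: "countable M" using assms(1) Md unfolding countably_cellular_def by auto
  have allm: "\<forall>P\<in>\<P>. \<exists>C\<in>M. P \<inter> C \<noteq> {}"
  proof (rule ccontr)
    assume "\<not> (\<forall>P\<in>\<P>. \<exists>C\<in>M. P \<inter> C \<noteq> {})"
    then obtain P where P: "P \<in> \<P>" "\<And>C. C \<in> M \<Longrightarrow> P \<inter> C = {}" by auto
    have "P \<noteq> {}" using assms(2) P(1) by auto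
    hence PM: "P \<notin> M" using P(2) by auto
    have "pairwise disjnt (insert P M)"
      unfolding pairwise_insert using Md P(2) by (auto simp: disjnt_def Int_commute)
    moreover have "insert P M \<subseteq> \<P>" using MP P(1) by auto
    ultimately have "insert P M \<in> ?S" by simp
    hence "insert P M = M" by (rule max) auto
    with PM show False by auto
  qed
  show ?thesis by (rule that[OF MP cM Md allm])
qed




lemma borel_preimage:
  assumes f: "continuous_map X Y f" and B: "B \<in> sigma_sets (topspace Y) {U. openin Y U}"
  shows "{x\<in>topspace X. f x \<in> B} \<in> sigma_sets (topspace X) {U. openin X U}"
  using B
proof induct
  case (Basic a)
  then have "openin X {x\<in>topspace X. f x \<in> a}" using openin_continuous_map_preimage f by blast
  then show ?case by (simp add: sigma_sets.Basic)
next
  case Empty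
  show ?case by (simp add: sigma_sets.Empty)
next
  case (Compl a)
  have eq: "{x\<in>topspace X. f x \<in> topspace Y - a} = topspace X - {x\<in>topspace X. f x \<in> a}"
    using continuous_map_image_subset_topspace[OF f] by auto
  show ?case unfolding eq by (rule sigma_sets.Compl) (rule Compl(2))
next
  case (Union a)
  have eq: "{x\<in>topspace X. f x \<in> (\<Union>i. a i)} = (\<Union>i. {x\<in>topspace X. f x \<in> a i})" by auto
  show ?case unfolding eq by (rule sigma_sets.Union) (rule Union(2))
qed

lemma topspace_real_omega [simp]: "topspace real_omega = UNIV"
  by (simp add: real_omega_def topspace_product_topology)

lemma fb_subset: "functionally_borel X A \<Longrightarrow> A \<subseteq> topspace X"
  unfolding functionally_borel_def by blast

lemma fb_empty: "functionally_borel X {}"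
  unfolding functionally_borel_def borel_sets_of_def
  by (rule exI[of _ "\<lambda>x n. 0"], rule exI[of _ "{}"]) (simp add: sigma_sets.Empty)

lemma fb_compl: "functionally_borel X A \<Longrightarrow> functionally_borel X (topspace X - A)"
  unfolding functionally_borel_def borel_sets_of_def
proof (elim exE conjE)
  fix f B assume f: "continuous_map X real_omega f"
    and B: "B \<in> sigma_sets (topspace real_omega) {U. openin real_omega U}"
    and A: "A = {x \<in> topspace X. f x \<in> B}"
  have "topspace real_omega - B \<in> sigma_sets (topspace real_omega) {U. openin real_omega U}"
    using B by (rule sigma_sets.Compl)
  moreover have "topspace X - A = {x \<in> topspace X. f x \<in> topspace real_omega - B}"
    using A by auto
  ultimately show "\<exists>f B. continuous_map X real_omega f \<and>
          B \<in> sigma_sets (topspace real_omega) {U. openin real_omega U} \<and>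
          topspace X - A = {x \<in> topspace X. f x \<in> B}" using f by blast
qed

lemma fb_cozero:
  assumes g: "continuous_map X euclideanreal g"
  shows "functionally_borel X {x\<in>topspace X. g x \<noteq> 0}"
proof -
  have f: "continuous_map X real_omega (\<lambda>x n. g x)"
    unfolding real_omega_def continuous_map_componentwise_UNIV using g by simp
  have p: "continuous_map real_omega euclideanreal (\<lambda>y. y 0)"
    unfolding real_omega_def by (rule continuous_map_product_projection) simp
  have "openin real_omega {y \<in> topspace real_omega. y 0 \<in> - {0}}"
    by (rule openin_continuous_map_preimage[OF p]) (simp add: open_Compl)
  hence "{y. y 0 \<noteq> 0} \<in> borel_sets_of real_omega"
    unfolding borel_sets_of_def by (auto intro: sigma_sets.Basic)
  moreover have "{x\<in>topspace X. g x \<noteq> 0} = {x\<in>topspace X. (\<lambda>n. g x) \<in> {y. y 0 \<noteq> 0}}" by simp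
  ultimately show ?thesis unfolding functionally_borel_def using f by (intro exI conjI)
qed

lemma fb_Union:
  assumes "\<And>n::nat. functionally_borel X (A n)"
  shows "functionally_borel X (\<Union>n. A n)"
proof -
  have "\<forall>n. \<exists>f B. continuous_map X real_omega f \<and> B \<in> borel_sets_of real_omega \<and>
            A n = {x \<in> topspace X. f x \<in> B}" using assms unfolding functionally_borel_def by blast
  then obtain f B where fB: "\<And>n. continuous_map X real_omega (f n)"
    "\<And>n. B n \<in> borel_sets_of real_omega" "\<And>n. A n = {x \<in> topspace X. f n x \<in> B n}"
    by metis
  define F where "F x = (\<lambda>m. f (fst (prod_decode m)) x (snd (prod_decode m)))" for x
  define \<pi> where "\<pi> k y = (\<lambda>m::nat. (y::nat\<Rightarrow>real) (prod_encode (k,m)))" for k y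
  have proj: "\<And>j. continuous_map real_omega euclideanreal (\<lambda>y. y j)"
    unfolding real_omega_def by (rule continuous_map_product_projection) simp
  have contF: "continuous_map X real_omega F"
    unfolding real_omega_def continuous_map_componentwise_UNIV
  proof
    fix m
    have "continuous_map X euclideanreal ((\<lambda>y. y (snd (prod_decode m))) \<circ> f (fst (prod_decode m)))"
      by (rule continuous_map_compose[OF fB(1) proj])
    then show "continuous_map X euclideanreal (\<lambda>x. F x m)" by (simp add: F_def o_def)
  qed
  have contpi: "continuous_map real_omega real_omega (\<pi> k)" for k
    unfolding continuous_map_componentwise_UNIV real_omega_def[symmetric] \<pi>_def
    using proj by (simp add: real_omega_def continuous_map_componentwise_UNIV)
  have Pk: "\<pi> k (F x) = f k x" for k x by (simp add: F_def \<pi>_def)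
  define C where "C = (\<Union>k. {y \<in> topspace real_omega. \<pi> k y \<in> B k})"
  have Cb: "C \<in> borel_sets_of real_omega"
    unfolding C_def borel_sets_of_def
    by (rule sigma_sets.Union, rule borel_preimage[OF contpi], rule fB(2)[unfolded borel_sets_of_def])
  have eqA: "(\<Union>n. A n) = {x\<in>topspace X. F x \<in> C}"
    unfolding C_def fB(3) by (auto simp: Pk)
  show ?thesis unfolding functionally_borel_def
    by (rule exI[of _ F], rule exI[of _ C]) (intro conjI contF Cb eqA)
qed

lemma Ba_sigma: "sigma_algebra (topspace X) (Ba X)"
  unfolding sigma_algebra_iff2 Ba_def
proof (intro conjI allI impI ballI)
  fix A :: "nat \<Rightarrow> 'a set" assume "range A \<subseteq> Collect (functionally_borel X)"
  then show "\<Union> (range A) \<in> Collect (functionally_borel X)" by (auto intro: fb_Union)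
qed (auto intro: fb_empty fb_compl dest: fb_subset)

lemma Ba_Bo: assumes "A \<in> Ba X" shows "A \<in> Bo X"
proof -
  obtain f B where f: "continuous_map X real_omega f" and B: "B \<in> borel_sets_of real_omega"
    and A: "A = {x \<in> topspace X. f x \<in> B}"
    using assms unfolding Ba_def functionally_borel_def by auto
  show ?thesis unfolding Bo_def borel_sets_of_def A
    by (rule borel_preimage[OF f B[unfolded borel_sets_of_def]])
qed




lemma nowhere_dense_frontier_open:
  assumes W: "openin X W" shows "nowhere_dense_in X (X closure_of W - W)"
proof -
  have eq: "X closure_of W - W = X frontier_of W"
    unfolding frontier_of_def interior_of_openin[OF W] ..
  have clF: "X closure_of (X closure_of W - W) = X closure_of W - W"
    unfolding eq by (rule closure_of_closedin[OF closedin_frontier_of])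
  let ?I = "X interior_of (X closure_of W - W)"
  have Iop: "openin X ?I" by (rule openin_interior_of)
  have I1: "?I \<subseteq> X closure_of W - W" by (rule interior_of_subset)
  have "?I \<inter> W = {}" using I1 by auto
  have "?I \<inter> X closure_of W = {} \<longleftrightarrow> ?I \<inter> W = {}" by (rule openin_Int_closure_of_eq_empty[OF Iop])
  hence "?I \<inter> X closure_of W = {}" using \<open>?I \<inter> W = {}\<close> by (rule iffD2)
  hence I0: "?I = {}" using I1 by auto
  have sub: "X closure_of W - W \<subseteq> topspace X" using closure_of_subset_topspace[of X W] by (rule order_trans[rotated]) auto
  show ?thesis unfolding nowhere_dense_in_def clF using sub I0 by (rule conjI)
qed

lemma open_Ba_approx:
  assumes cr: "completely_regular_space X" and cc: "countably_cellular X" and U: "openin X U"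
  shows "\<exists>W. W \<in> Ba X \<and> W \<subseteq> U \<and> meager_in X (U - W)"
proof -
  define P where "P = {P. P \<noteq> {} \<and> P \<subseteq> U \<and> (\<exists>g. continuous_map X euclideanreal g \<and> P = {x\<in>topspace X. g x \<noteq> 0})}"
  have Pop: "openin X Q \<and> Q \<noteq> {}" if Qin: "Q \<in> P" for Q
  proof -
    obtain g where g: "continuous_map X euclideanreal g" and Q0: "Q = {x\<in>topspace X. g x \<noteq> 0}"
      using Qin unfolding P_def mem_Collect_eq by metis
    have Q2: "Q \<noteq> {}" using Qin unfolding P_def by auto
    have Q: "Q = {x\<in>topspace X. g x \<in> - {0}}" "Q \<noteq> {}" using Q0 Q2 by auto
    have "openin X Q" unfolding Q(1) by (rule openin_continuous_map_preimage[OF g]) (simp add: open_Compl)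
    then show ?thesis using Q(2) by simp
  qed
  have PU: "Q \<subseteq> U" if "Q \<in> P" for Q
    using that unfolding P_def mem_Collect_eq by (elim conjE)
  have Pg: "\<exists>g. continuous_map X euclideanreal g \<and> Q = {x\<in>topspace X. g x \<noteq> 0}" if "Q \<in> P" for Q
    using that unfolding P_def mem_Collect_eq by (elim conjE)
  obtain \<C> where C: "\<C> \<subseteq> P" "countable \<C>" "pairwise disjnt \<C>" "\<forall>Q\<in>P. \<exists>C\<in>\<C>. Q \<inter> C \<noteq> {}"
    by (rule ccc_maximal[of X P, OF cc Pop])
  define W where "W = \<Union>\<C>"
  have CBa: "\<C> \<subseteq> Ba X"
  proof
    fix Q assume "Q \<in> \<C>"
    then have "Q \<in> P" by (rule subsetD[OF C(1)])
    then obtain g where g: "continuous_map X euclideanreal g" and Q: "Q = {x\<in>topspace X. g x \<noteq> 0}"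
      using Pg by metis
    show "Q \<in> Ba X" unfolding Ba_def Q mem_Collect_eq by (rule fb_cozero[OF g])
  qed
  have WBa: "W \<in> Ba X" unfolding W_def
    by (rule sigma_algebra.countable_Union[OF Ba_sigma C(2) CBa])
  have WU: "W \<subseteq> U" unfolding W_def
  proof (rule Union_least)
    fix Q assume "Q \<in> \<C>"
    then have "Q \<in> P" by (rule subsetD[OF C(1)])
    then show "Q \<subseteq> U" by (rule PU)
  qed
  have Wop: "openin X W" unfolding W_def
  proof (rule openin_Union)
    fix Q assume "Q \<in> \<C>"
    then have "Q \<in> P" by (rule subsetD[OF C(1)])
    then show "openin X Q" using Pop by simp
  qed
  have Wt: "W \<subseteq> topspace X" using Wop openin_subset by auto
  have Ucl: "U \<subseteq> X closure_of W"
  proof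
    fix x assume x: "x \<in> U"
    show "x \<in> X closure_of W"
    proof (rule ccontr)
      assume nx: "x \<notin> X closure_of W"
      define V where "V = U - X closure_of W"
      have Vop: "openin X V" unfolding V_def by (rule openin_diff[OF U closedin_closure_of])
      have xt: "x \<in> topspace X" by (rule subsetD[OF openin_subset[OF U] x])
      have c1: "closedin X (topspace X - V)" by (rule closedin_diff[OF closedin_topspace Vop])
      have xV: "x \<in> V" unfolding V_def using x nx by (rule DiffI)
      have c2: "x \<in> topspace X - (topspace X - V)" using xt xV by blast
      have ex: "\<exists>h::'a\<Rightarrow>real. continuous_map X (top_of_set {0..1}) h \<and> h x = 0 \<and> h ` (topspace X - V) \<subseteq> {1}"
        by (rule cr[unfolded completely_regular_space_def, rule_format, OF conjI[OF c1 c2]])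
      obtain h :: "'a \<Rightarrow> real" where hh: "continuous_map X (top_of_set {0..1}) h \<and> h x = 0 \<and> h ` (topspace X - V) \<subseteq> {1}"
        by (rule exE[OF ex]) (rule that)
      have h: "continuous_map X (top_of_set {0..1}) h" "h x = 0" "h ` (topspace X - V) \<subseteq> {1}"
        using hh by auto
      have hc: "continuous_map X euclideanreal h"
        using h(1) unfolding continuous_map_in_subtopology by (rule conjunct1)
      define g where "g y = 1 - h y" for y
      have gc: "continuous_map X euclideanreal g"
        unfolding g_def by (rule continuous_map_diff[OF _ hc]) simp
      define Q where "Q = {y\<in>topspace X. g y \<noteq> 0}"
      have xQ: "x \<in> Q" unfolding Q_def g_def using xt h(2) by simp
      have QV: "Q \<subseteq> V"
      proof
        fix y assume y: "y \<in> Q"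
        show "y \<in> V"
        proof (rule ccontr)
          assume "y \<notin> V"
          moreover have "y \<in> topspace X" using y unfolding Q_def by simp
          ultimately have "y \<in> topspace X - V" by simp
          then have "h y \<in> h ` (topspace X - V)" by (rule imageI)
          then have "h y = 1" using h(3) by auto
          then show False using y unfolding Q_def g_def by simp
        qed
      qed
      have QU: "Q \<subseteq> U" using QV unfolding V_def by auto
      have Qne: "Q \<noteq> {}" using xQ by auto
      have "Q \<in> P" unfolding P_def mem_Collect_eq by (intro conjI exI[of _ g] gc QU Q_def Qne)
      then have "\<exists>C\<in>\<C>. Q \<inter> C \<noteq> {}" by (rule bspec[OF C(4)])
      then obtain C0 where C0: "C0 \<in> \<C>" "Q \<inter> C0 \<noteq> {}" by auto
      have "C0 \<subseteq> W" unfolding W_def using C0(1) by auto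
      then have "C0 \<subseteq> X closure_of W" using closure_of_subset[OF Wt] by auto
      then show False using C0(2) QV unfolding V_def by auto
    qed
  qed
  have "U - W \<subseteq> X closure_of W - W" using Ucl by auto
  then have "nowhere_dense_in X (U - W)"
    by (rule nowhere_dense_subset[OF nowhere_dense_frontier_open[OF Wop]])
  then show ?thesis using WBa WU nowhere_dense_meager by auto
qed




lemma meager_empty: "meager_in X {}"
  unfolding meager_in_def by (intro conjI exI[of _ "{}"]) auto

lemma borel_BP:
  assumes "D \<in> sigma_sets (topspace X) {U. openin X U}"
  shows "\<exists>U. openin X U \<and> meager_in X ((D - U) \<union> (U - D))"
  using assms
proof induct
  case (Basic a)
  hence "openin X a" by simp
  then show ?case by (intro exI[of _ a] conjI) (simp_all add: meager_empty)
next
  case Empty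
  show ?case by (intro exI[of _ "{}"] conjI) (simp_all add: meager_empty)
next
  case (Compl a)
  from Compl(2) obtain U where U: "openin X U" "meager_in X ((a - U) \<union> (U - a))" by blast
  define V where "V = X interior_of (topspace X - U)"
  have Vop: "openin X V" unfolding V_def by (rule openin_interior_of)
  have nd: "nowhere_dense_in X ((topspace X - U) - V)" unfolding V_def
    by (rule nowhere_dense_closed_minus_interior[OF closedin_diff[OF closedin_topspace U(1)]])
  have VU: "V \<subseteq> topspace X - U" unfolding V_def by (rule interior_of_subset)
  have "((topspace X - a) - V) \<union> (V - (topspace X - a)) \<subseteq> ((a - U) \<union> (U - a)) \<union> ((topspace X - U) - V)"
    using VU by auto
  hence "meager_in X (((topspace X - a) - V) \<union> (V - (topspace X - a)))"
    by (rule meager_subset[OF meager_Un[OF U(2) nowhere_dense_meager[OF nd]]])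
  then show ?case using Vop by (intro exI[of _ V] conjI)
next
  case (Union a)
  have "\<forall>i. \<exists>U. openin X U \<and> meager_in X ((a i - U) \<union> (U - a i))" using Union(2) by auto
  then have "\<exists>U. \<forall>i. openin X (U i) \<and> meager_in X ((a i - U i) \<union> (U i - a i))" by (rule choice)
  then obtain U where U: "\<forall>i. openin X (U i) \<and> meager_in X ((a i - U i) \<union> (U i - a i))" by blast
  have sub: "((\<Union>i. a i) - (\<Union>i. U i)) \<union> ((\<Union>i. U i) - (\<Union>i. a i))
      \<subseteq> \<Union>(range (\<lambda>i. (a i - U i) \<union> (U i - a i)))" by auto
  have "meager_in X (\<Union>(range (\<lambda>i. (a i - U i) \<union> (U i - a i))))"
  proof (rule meager_Union)
    show "countable (range (\<lambda>i. (a i - U i) \<union> (U i - a i)))" by simp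
  next
    fix A assume "A \<in> range (\<lambda>i. (a i - U i) \<union> (U i - a i))"
    then obtain i where "A = (a i - U i) \<union> (U i - a i)" by auto
    then show "meager_in X A" using U by simp
  qed
  hence m: "meager_in X (((\<Union>i. a i) - (\<Union>i. U i)) \<union> ((\<Union>i. U i) - (\<Union>i. a i)))"
    using sub by (rule meager_subset)
  have "openin X (\<Union>i. U i)" by (rule openin_Union) (use U in auto)
  then show ?case using m by (intro exI[of _ "\<Union>i. U i"] conjI)
qed

theorem lemma7p1:
  fixes X :: "'a topology"
  assumes "tychonoff_space X" and "countably_cellular X"
  shows "(\<forall>M. meager_in X M \<longrightarrow>
            (\<exists>A. M \<subseteq> A \<and> meager_in X A \<and> functionally_borel X A))
       \<and> (\<forall>\<D>. (\<forall>D\<in>\<D>. D \<in> Bo X \<and> \<not> meager_in X D) \<and> pairwise disjnt \<D>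
                \<longrightarrow> countable \<D>)
       \<and> pm_sigma X (Bo X) (meager_ideal X) = pm_sigma X (Ba X) (meager_ideal X)
       \<and> pm_sigma X (Bo X) (meager_ideal X) = baire_property_sets X"
proof -
  have cr: "completely_regular_space X" using assms(1) unfolding tychonoff_space_def by simp
  note cc = assms(2)
  have approx: "\<exists>W. W \<in> Ba X \<and> W \<subseteq> U \<and> meager_in X (U - W)" if "openin X U" for U
    by (rule open_Ba_approx[OF cr cc that])
  have P1: "\<forall>M. meager_in X M \<longrightarrow> (\<exists>A. M \<subseteq> A \<and> meager_in X A \<and> functionally_borel X A)"
  proof (intro allI impI)
    fix M assume M: "meager_in X M"
    then obtain \<N> where N: "countable \<N>" "\<forall>N\<in>\<N>. nowhere_dense_in X N" "M \<subseteq> \<Union>\<N>"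
      unfolding meager_in_def by auto
    have "\<forall>N\<in>\<N>. \<exists>A. A \<in> Ba X \<and> N \<subseteq> A \<and> meager_in X A"
    proof
      fix N assume "N \<in> \<N>"
      hence nd: "nowhere_dense_in X N" using N(2) by simp
      have Nt: "N \<subseteq> topspace X" using nd unfolding nowhere_dense_in_def by simp
      define U where "U = topspace X - X closure_of N"
      have Uo: "openin X U" unfolding U_def by (rule openin_diff[OF openin_topspace closedin_closure_of])
      obtain W where W: "W \<in> Ba X" "W \<subseteq> U" "meager_in X (U - W)" using approx[OF Uo] by auto
      have ndc: "nowhere_dense_in X (X closure_of N)"
        using nd closure_of_subset_topspace[of X N] unfolding nowhere_dense_in_def closure_of_closure_of
        by simp
      have "topspace X - W \<subseteq> X closure_of N \<union> (U - W)" unfolding U_def by auto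
      hence m: "meager_in X (topspace X - W)"
        by (rule meager_subset[OF meager_Un[OF nowhere_dense_meager[OF ndc] W(3)]])
      have b: "topspace X - W \<in> Ba X" by (rule algebra.compl_sets[OF sigma_algebra.axioms(1)[OF Ba_sigma] W(1)])
      have "N \<subseteq> X closure_of N" by (rule closure_of_subset[OF Nt])
      hence s: "N \<subseteq> topspace X - W" using W(2) Nt unfolding U_def by auto
      show "\<exists>A. A \<in> Ba X \<and> N \<subseteq> A \<and> meager_in X A"
        by (intro exI[of _ "topspace X - W"] conjI b s m)
    qed
    then have "\<exists>F. \<forall>N\<in>\<N>. F N \<in> Ba X \<and> N \<subseteq> F N \<and> meager_in X (F N)" by (rule bchoice)
    then obtain F where F: "\<forall>N\<in>\<N>. F N \<in> Ba X \<and> N \<subseteq> F N \<and> meager_in X (F N)" by blast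
    have FB: "F ` \<N> \<subseteq> Ba X" using F by auto
    have AB: "\<Union>(F ` \<N>) \<in> Ba X"
      by (rule sigma_algebra.countable_Union[OF Ba_sigma countable_image[OF N(1)] FB])
    have Am: "meager_in X (\<Union>(F ` \<N>))"
    proof (rule meager_Union)
      show "countable (F ` \<N>)" using N(1) by simp
    next
      fix A assume "A \<in> F ` \<N>" then show "meager_in X A" using F by auto
    qed
    have MA: "M \<subseteq> \<Union>(F ` \<N>)" using N(3) F by blast
    show "\<exists>A. M \<subseteq> A \<and> meager_in X A \<and> functionally_borel X A"
      using AB unfolding Ba_def mem_Collect_eq by (intro exI[of _ "\<Union>(F ` \<N>)"] conjI MA Am)
  qed
  have P2: "\<forall>\<D>. (\<forall>D\<in>\<D>. D \<in> Bo X \<and> \<not> meager_in X D) \<and> pairwise disjnt \<D> \<longrightarrow> countable \<D>"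
  proof (intro allI impI)
    fix \<D> :: "'a set set"
    assume H: "(\<forall>D\<in>\<D>. D \<in> Bo X \<and> \<not> meager_in X D) \<and> pairwise disjnt \<D>"
    define Pm where "Pm = {P. openin X P \<and> P \<noteq> {} \<and> meager_in X P}"
    have Pmop: "openin X Q \<and> Q \<noteq> {}" if "Q \<in> Pm" for Q using that unfolding Pm_def by simp
    obtain \<C> where C: "\<C> \<subseteq> Pm" "countable \<C>" "pairwise disjnt \<C>" "\<forall>Q\<in>Pm. \<exists>C\<in>\<C>. Q \<inter> C \<noteq> {}"
      by (rule ccc_maximal[of X Pm, OF cc Pmop])
    define G where "G = \<Union>\<C>"
    have Gm: "meager_in X G" unfolding G_def
    proof (rule meager_Union[OF C(2)])
      fix A assume "A \<in> \<C>" then show "meager_in X A" using C(1) unfolding Pm_def by auto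
    qed
    have Gop: "openin X G" unfolding G_def
    proof (rule openin_Union)
      fix A assume "A \<in> \<C>" then show "openin X A" using C(1) unfolding Pm_def by auto
    qed
    have bd: "meager_in X (X closure_of G - G)"
      by (rule nowhere_dense_meager[OF nowhere_dense_frontier_open[OF Gop]])
    have clGm: "meager_in X (X closure_of G)"
      by (rule meager_subset[OF meager_Un[OF Gm bd]]) auto
    have "\<forall>D\<in>\<D>. \<exists>U. openin X U \<and> meager_in X ((D - U) \<union> (U - D))"
    proof
      fix D assume "D \<in> \<D>"
      hence "D \<in> sigma_sets (topspace X) {U. openin X U}"
        using H unfolding Bo_def borel_sets_of_def by auto
      then show "\<exists>U. openin X U \<and> meager_in X ((D - U) \<union> (U - D))" by (rule borel_BP)
    qed
    then have "\<exists>Uf. \<forall>D\<in>\<D>. openin X (Uf D) \<and> meager_in X ((D - Uf D) \<union> (Uf D - D))" by (rule bchoice)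
    then obtain Uf where Uf: "\<forall>D\<in>\<D>. openin X (Uf D) \<and> meager_in X ((D - Uf D) \<union> (Uf D - D))" by blast
    define V where "V D = Uf D - X closure_of G" for D
    have Vop: "openin X (V D)" if "D \<in> \<D>" for D
      unfolding V_def by (rule openin_diff) (use Uf that in auto)
    have Vne: "V D \<noteq> {}" if D: "D \<in> \<D>" for D
    proof
      assume "V D = {}"
      hence "Uf D \<subseteq> X closure_of G" unfolding V_def by auto
      hence m1: "meager_in X (Uf D)" by (rule meager_subset[OF clGm])
      have m2: "meager_in X ((D - Uf D) \<union> (Uf D - D))" using Uf D by simp
      have "D \<subseteq> Uf D \<union> ((D - Uf D) \<union> (Uf D - D))" by auto
      hence "meager_in X D" by (rule meager_subset[OF meager_Un[OF m1 m2]])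
      then show False using H D by simp
    qed
    have Vdis: "V D \<inter> V D' = {}" if DD: "D \<in> \<D>" "D' \<in> \<D>" "D \<noteq> D'" for D D'
    proof (rule ccontr)
      assume ne: "V D \<inter> V D' \<noteq> {}"
      have "disjnt D D'" using H DD unfolding pairwise_def by auto
      hence "V D \<inter> V D' \<subseteq> ((D - Uf D) \<union> (Uf D - D)) \<union> ((D' - Uf D') \<union> (Uf D' - D'))"
        unfolding V_def disjnt_def by auto
      moreover have "meager_in X ((D - Uf D) \<union> (Uf D - D))" using Uf DD by simp
      moreover have "meager_in X ((D' - Uf D') \<union> (Uf D' - D'))" using Uf DD by simp
      ultimately have m: "meager_in X (V D \<inter> V D')" by (metis meager_subset meager_Un)
      have "openin X (V D \<inter> V D')" using Vop DD by (intro openin_Int) auto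
      hence "V D \<inter> V D' \<in> Pm" using ne m unfolding Pm_def by simp
      then have "\<exists>C\<in>\<C>. V D \<inter> V D' \<inter> C \<noteq> {}" by (rule bspec[OF C(4)])
      then obtain C0 where C0: "C0 \<in> \<C>" "V D \<inter> V D' \<inter> C0 \<noteq> {}" by auto
      have Gt: "G \<subseteq> topspace X" by (rule openin_subset[OF Gop])
      have "C0 \<subseteq> G" unfolding G_def using C0(1) by auto
      hence "C0 \<subseteq> X closure_of G" using closure_of_subset[OF Gt] by auto
      then show False using C0(2) unfolding V_def by auto
    qed
    have cV: "countable (V ` \<D>)"
    proof -
      have "\<forall>U\<in>V ` \<D>. openin X U" using Vop by auto
      moreover have "pairwise disjnt (V ` \<D>)"
        unfolding pairwise_def disjnt_def using Vdis by auto
      ultimately show ?thesis using cc unfolding countably_cellular_def by auto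
    qed
    have "inj_on V \<D>"
    proof (rule inj_onI)
      fix D D' assume DD: "D \<in> \<D>" "D' \<in> \<D>" "V D = V D'"
      show "D = D'"
      proof (rule ccontr)
        assume "D \<noteq> D'"
        hence "V D \<inter> V D' = {}" using Vdis DD by auto
        hence "V D = {}" using DD(3) by simp
        then show False using Vne DD(1) by auto
      qed
    qed
    then show "countable \<D>" by (rule countable_image_inj_on[OF cV])
  qed
  have BaBo: "Ba X \<subseteq> Bo X" using Ba_Bo by auto
  have E1: "pm_sigma X (Bo X) (meager_ideal X) = pm_sigma X (Ba X) (meager_ideal X)"
  proof
    show "pm_sigma X (Ba X) (meager_ideal X) \<subseteq> pm_sigma X (Bo X) (meager_ideal X)"
      unfolding pm_sigma_def by (rule sigma_sets_subseteq) (use BaBo in auto)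
    have opens: "{U. openin X U} \<subseteq> pm_sigma X (Ba X) (meager_ideal X)"
    proof
      fix U assume "U \<in> {U. openin X U}" hence Uo: "openin X U" by simp
      obtain W where W: "W \<in> Ba X" "W \<subseteq> U" "meager_in X (U - W)" using approx[OF Uo] by auto
      have w1: "W \<in> pm_sigma X (Ba X) (meager_ideal X)" unfolding pm_sigma_def
        using W(1) by (auto intro: sigma_sets.Basic)
      have w2: "U - W \<in> pm_sigma X (Ba X) (meager_ideal X)" unfolding pm_sigma_def meager_ideal_def
        using W(3) by (auto intro: sigma_sets.Basic)
      have "W \<union> (U - W) \<in> pm_sigma X (Ba X) (meager_ideal X)"
        using w1 w2 unfolding pm_sigma_def by (rule sigma_sets_Un)
      moreover have "W \<union> (U - W) = U" using W(2) by auto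
      ultimately show "U \<in> pm_sigma X (Ba X) (meager_ideal X)" by simp
    qed
    have "Bo X \<subseteq> pm_sigma X (Ba X) (meager_ideal X)"
      unfolding Bo_def borel_sets_of_def using opens unfolding pm_sigma_def by (rule sigma_sets_mono)
    moreover have "meager_ideal X \<subseteq> pm_sigma X (Ba X) (meager_ideal X)"
      unfolding pm_sigma_def by (auto intro: sigma_sets.Basic)
    ultimately have "Bo X \<union> meager_ideal X \<subseteq> pm_sigma X (Ba X) (meager_ideal X)" by auto
    then show "pm_sigma X (Bo X) (meager_ideal X) \<subseteq> pm_sigma X (Ba X) (meager_ideal X)"
      unfolding pm_sigma_def by (rule sigma_sets_mono)
  qed
  have E2: "pm_sigma X (Bo X) (meager_ideal X) = baire_property_sets X"
  proof
    have "Bo X \<subseteq> baire_property_sets X"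
      unfolding Bo_def borel_sets_of_def baire_property_sets_def by (rule sigma_sets_subseteq) auto
    moreover have "meager_ideal X \<subseteq> baire_property_sets X"
      unfolding baire_property_sets_def by (auto intro: sigma_sets.Basic)
    ultimately have "Bo X \<union> meager_ideal X \<subseteq> baire_property_sets X" by auto
    then show "pm_sigma X (Bo X) (meager_ideal X) \<subseteq> baire_property_sets X"
      unfolding pm_sigma_def baire_property_sets_def by (rule sigma_sets_mono)
    have "{U. openin X U} \<subseteq> Bo X" unfolding Bo_def borel_sets_of_def by (auto intro: sigma_sets.Basic)
    then show "baire_property_sets X \<subseteq> pm_sigma X (Bo X) (meager_ideal X)"
      unfolding pm_sigma_def baire_property_sets_def by (intro sigma_sets_subseteq) auto
  qed
  show ?thesis by (intro conjI P1 P2 E1 E2)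
qed


end
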